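(* Let $A$ be a finite set of nonnegative integers with $0\in A$, and suppose $A$ tiles the integers with period $n$, where $n$ has exactly two distinct prime factors $p$ and $q$. If neither $\Phi_p(x)$ nor $\Phi_q(x)$ divides $A(x)=\sum_{a\in A}x^a$, then $A\subset p\mathbb Z$ or $A\subset q\mathbb Z$.
   Context: $A$ tiles the integers with period $n$ means there is $C\subseteq\mathbb Z$ with every integer uniquely $a+c$ ($a\in A$, $c\in C$), such that $n$ is the smallest positive integer with $C+n=C$. $\Phi_p(x)$ is the $p$-th cyclotomic polynomial. *)

theory Defs
  imports "HOL-Computational_Algebra.Computational_Algebra"
begin

definition tiles_with_period :: "int set \<Rightarrow> nat \<Rightarrow> bool" where
  "tiles_with_period A n \<longleftrightarrow>
     (\<exists>C :: int set.
        (\<forall>z :: int. \<exists>!(a, c). a \<in> A \<and> c \<in> C \<and> z = a + c) \<and>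
        n > 0 \<and> (\<lambda>c. c + int n) ` C = C \<and>
        (\<forall>m. 0 < m \<and> m < n \<longrightarrow> (\<lambda>c. c + int m) ` C \<noteq> C))"

definition mask_poly :: "nat set \<Rightarrow> int poly" where
  "mask_poly A = (\<Sum>a\<in>A. monom 1 a)"

definition cyclotomic_prime :: "nat \<Rightarrow> int poly" where
  "cyclotomic_prime p = (\<Sum>i<p. monom 1 i)"

end

theory Submission
  imports Defs
begin


lemma pow_minus_one_dvd: "(x - 1) dvd (x ^ j - (1::'a::comm_ring_1))"
proof (induction j)
  case 0 then show ?case by simp
next
  case (Suc j)
  have "x ^ Suc j - 1 = x * (x ^ j - 1) + (x - 1)" by (simp add: algebra_simps)
  then show ?case using Suc by (metis dvd_add dvd_mult dvd_refl)
qed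

lemma monom_mod_cong:
  assumes "n > 0"
  shows "(monom 1 n - 1) dvd (monom (1::int) k - monom 1 (k mod n))"
proof -
  have k: "monom (1::int) k = monom 1 (k mod n) * (monom 1 n) ^ (k div n)"
    by (simp add: mult_monom monom_power)
  have "monom (1::int) k - monom 1 (k mod n) = monom 1 (k mod n) * ((monom 1 n) ^ (k div n) - 1)"
    by (simp add: k algebra_simps)
  then show ?thesis using pow_minus_one_dvd by (metis dvd_mult)
qed

lemma reduce_poly:
  assumes "n > 0"
  shows "\<exists>G'. (\<forall>k\<ge>n. coeff G' k = 0) \<and> (monom 1 n - 1) dvd (G - (G'::int poly))"
proof -
  define G' where "G' = (\<Sum>i\<le>degree G. monom (coeff G i) (i mod n))"
  have md: "\<And>i. i mod n < n" using assms by simp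
  have "\<forall>k\<ge>n. coeff G' k = 0"
    using md by (auto simp: G'_def coeff_sum coeff_monom intro!: sum.neutral) (meson leD md)
  moreover have "(monom 1 n - 1) dvd (G - G')"
  proof -
    have "G - G' = (\<Sum>i\<le>degree G. monom (coeff G i) i - monom (coeff G i) (i mod n))"
      by (simp add: G'_def sum_subtractf poly_as_sum_of_monoms)
    also have "\<dots> = (\<Sum>i\<le>degree G. smult (coeff G i) (monom 1 i - monom 1 (i mod n)))"
      by (simp add: smult_monom smult_diff_right)
    finally show ?thesis using monom_mod_cong[OF assms]
      by (metis (no_types, lifting) dvd_sum dvd_smult)
  qed
  ultimately show ?thesis by blast
qed

lemma small_dvd_zero:
  assumes "n > 0" "\<forall>k\<ge>n. coeff f k = 0" "(monom 1 n - 1) dvd (f::int poly)"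
  shows "f = 0"
proof (rule ccontr)
  assume f0: "f \<noteq> 0"
  obtain k where k: "f = (monom 1 n - 1) * k" using assms(3) by blast
  have k0: "k \<noteq> 0" using f0 k by auto
  have dm: "degree (monom (1::int) n - 1) = n"
  proof (rule antisym)
    show "degree (monom (1::int) n - 1) \<le> n"
      by (rule degree_diff_le) (auto simp: degree_monom_eq)
    have "coeff (monom (1::int) n - 1) n = 1" using assms(1) by simp
    then show "n \<le> degree (monom (1::int) n - 1)" by (metis le_degree one_neq_zero)
  qed
  have "monom (1::int) n - 1 \<noteq> 0" using dm assms(1) by auto
  then have "degree f = n + degree k" using k k0 dm by (simp add: degree_mult_eq)
  then have "coeff f (degree f) = 0" using assms(2) by simp
  then show False using f0 by simp
qed

lemma frob2:
  assumes "prime r"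
  shows "\<exists>H. (x + y) ^ r = x ^ r + y ^ r + of_nat r * (H::'a::comm_ring_1)"
proof -
  have r0: "r > 0" using assms prime_gt_0_nat by blast
  have "(x + y) ^ r = (\<Sum>k\<le>r. of_nat (r choose k) * x ^ k * y ^ (r - k))"
    by (simp add: binomial_ring)
  also have "\<dots> = (\<Sum>k\<in>{0,r}. of_nat (r choose k) * x ^ k * y ^ (r - k))
        + (\<Sum>k\<in>{1..<r}. of_nat (r choose k) * x ^ k * y ^ (r - k))"
  proof -
    have "{..r} = {0,r} \<union> {1..<r}" using r0 by auto
    moreover have "{0,r} \<inter> {1..<r} = {}" by auto
    ultimately show ?thesis
      using sum.union_disjoint[of "{0,r}" "{1..<r}" "\<lambda>k. of_nat (r choose k) * x ^ k * y ^ (r - k)"]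
      by simp
  qed
  also have "(\<Sum>k\<in>{0,r}. of_nat (r choose k) * x ^ k * y ^ (r - k)) = x ^ r + y ^ r"
    using r0 by (simp add: add.commute)
  also have "(\<Sum>k\<in>{1..<r}. of_nat (r choose k) * x ^ k * y ^ (r - k))
      = of_nat r * (\<Sum>k\<in>{1..<r}. of_nat ((r choose k) div r) * x ^ k * y ^ (r - k))"
  proof -
    have "\<And>k. k \<in> {1..<r} \<Longrightarrow> (r choose k) = r * ((r choose k) div r)"
      using dvd_choose_prime[OF _ _ _ assms] by auto
    then have "\<And>k. k \<in> {1..<r} \<Longrightarrow> of_nat (r choose k) * x ^ k * y ^ (r - k)
        = of_nat r * (of_nat ((r choose k) div r) * x ^ k * y ^ (r - k))"
      by (metis (no_types, lifting) mult.assoc of_nat_mult)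
    then show ?thesis by (simp add: sum_distrib_left)
  qed
  finally show ?thesis by blast
qed



definition tile :: "nat \<Rightarrow> nat set \<Rightarrow> nat set \<Rightarrow> bool" where
  "tile n A C \<longleftrightarrow> finite A \<and> finite C \<and>
     (\<forall>i<n. card {x \<in> A \<times> C. (fst x + snd x) mod n = i} = 1)"

lemma card_fibers:
  assumes "finite S" "\<forall>x\<in>S. g x < (n::nat)"
  shows "card S = (\<Sum>i<n. card {x\<in>S. g x = i})"
proof -
  have "(\<Sum>i<n. sum (\<lambda>_. 1::nat) {x\<in>S. g x = i}) = sum (\<lambda>_. 1) S"
    by (rule sum.group) (use assms in auto)
  then show ?thesis by simp
qed

lemma tile_card:
  assumes "n > 0" "tile n A C"
  shows "card A * card C = n"
proof -
  have f: "finite A" "finite C" using assms(2) tile_def by auto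
  have "card (A \<times> C) = (\<Sum>i<n. card {x\<in>A \<times> C. (fst x + snd x) mod n = i})"
    by (rule card_fibers) (use f assms(1) in auto)
  also have "\<dots> = (\<Sum>i<n. 1)" using assms(2) unfolding tile_def by simp
  finally show ?thesis by (simp add: card_cartesian_product)
qed

lemma fold_sum:
  assumes "n > 0" "finite S"
  shows "(monom 1 n - 1) dvd ((\<Sum>x\<in>S. monom (1::int) (g x))
           - (\<Sum>i<n. monom (of_nat (card {x\<in>S. g x mod n = i})) i))"
proof -
  have "(\<Sum>i<n. monom (of_nat (card {x\<in>S. g x mod n = i})) i)
      = (\<Sum>i<n. \<Sum>x\<in>{x\<in>S. g x mod n = i}. monom (1::int) (g x mod n))"
    by (intro sum.cong refl) (simp add: monom_sum[symmetric] of_nat_mult_conv_smult smult_monom)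
  also have "\<dots> = (\<Sum>x\<in>S. monom 1 (g x mod n))"
    by (rule sum.group) (use assms in auto)
  finally have e: "(\<Sum>i<n. monom (of_nat (card {x\<in>S. g x mod n = i})) i) = (\<Sum>x\<in>S. monom (1::int) (g x mod n))" .
  have "(\<Sum>x\<in>S. monom (1::int) (g x)) - (\<Sum>x\<in>S. monom 1 (g x mod n))
       = (\<Sum>x\<in>S. monom 1 (g x) - monom 1 (g x mod n))"
    by (simp add: sum_subtractf)
  then show ?thesis using e monom_mod_cong[OF assms(1)] by (simp add: dvd_sum)
qed

lemma monom_shift_S:
  assumes "n > 0"
  shows "(monom 1 n - 1) dvd (monom (1::int) a * (\<Sum>i<n. monom 1 i) - (\<Sum>i<n. monom 1 i))"
proof (induction a)
  case 0 then show ?case by simp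
next
  case (Suc a)
  define S where "S = (\<Sum>i<n. monom (1::int) i)"
  have t: "monom 1 1 * S - S = monom 1 n - 1"
  proof -
    have "monom 1 1 * S - S = (\<Sum>i<n. monom (1::int) (Suc i) - monom 1 i)"
      by (simp add: S_def sum_distrib_left mult_monom sum_subtractf)
    also have "\<dots> = monom 1 n - 1" by (subst sum_lessThan_telescope) (simp add: one_pCons monom_0)
    finally show ?thesis .
  qed
  have "monom 1 (Suc a) * S - S = monom 1 1 * (monom 1 a * S - S) + (monom 1 1 * S - S)"
    by (simp add: algebra_simps mult_monom)
  then show ?case using Suc t unfolding S_def[symmetric] by (metis dvd_add dvd_mult dvd_refl)
qed

lemma frob_set:
  assumes "prime r" "finite A"
  shows "\<exists>H. (\<Sum>a\<in>A. monom (1::int) a) ^ r = (\<Sum>a\<in>A. monom 1 (r * a)) + of_nat r * H"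
  using assms(2)
proof (induction A rule: finite_induct)
  case empty
  have "r > 0" using assms(1) prime_gt_0_nat by blast
  then show ?case by (intro exI[of _ 0]) (simp add: zero_power)
next
  case (insert a A)
  obtain H where H: "(\<Sum>a\<in>A. monom (1::int) a) ^ r = (\<Sum>a\<in>A. monom 1 (r * a)) + of_nat r * H"
    using insert by blast
  obtain H1 where H1: "(monom 1 a + (\<Sum>a\<in>A. monom (1::int) a)) ^ r
      = monom 1 a ^ r + (\<Sum>a\<in>A. monom (1::int) a) ^ r + of_nat r * H1"
    using frob2[OF assms(1)] by blast
  have "(\<Sum>a\<in>insert a A. monom (1::int) a) ^ r
      = monom 1 (r * a) + (\<Sum>a\<in>A. monom 1 (r * a)) + of_nat r * (H + H1)"
    using insert H H1 by (simp add: monom_power algebra_simps)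
  then show ?case using insert by (intro exI[of _ "H + H1"]) simp
qed



lemma all_one:
  assumes "\<forall>i<n. f i \<ge> (1::nat)" "(\<Sum>i<n. f i) = n"
  shows "\<forall>i<n. f i = 1"
proof -
  have "(\<Sum>i<n. f i) = (\<Sum>i<n. 1 + (f i - 1))"
    using assms(1) by (intro sum.cong) auto
  also have "\<dots> = n + (\<Sum>i<n. f i - 1)" by (simp only: sum.distrib) simp
  finally have "(\<Sum>i<n. f i - 1) = 0" using assms(2) by simp
  then show ?thesis using assms(1) by (simp add: le_antisym)
qed

lemma dil_prime:
  assumes n0: "n > 0" and T: "tile n A C" and r: "prime r" and nd: "\<not> r dvd card A"
  shows "tile n ((*) r ` A) C"
proof -
  have fA: "finite A" and fC: "finite C" using T tile_def by auto
  define M where "M = monom (1::int) n - 1"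
  define P where "P = (\<Sum>a\<in>A. monom (1::int) a)"
  define Q where "Q = (\<Sum>c\<in>C. monom (1::int) c)"
  define S where "S = (\<Sum>i<n. monom (1::int) i)"
  define Pr where "Pr = (\<Sum>a\<in>A. monom (1::int) (r * a))"
  define N where "N i = card {x \<in> A \<times> C. (r * fst x + snd x) mod n = i}" for i
  have PQ: "P * Q = (\<Sum>x\<in>A \<times> C. monom 1 (fst x + snd x))"
    by (simp add: P_def Q_def sum_product sum.cartesian_product mult_monom case_prod_beta)
  have PrQ: "Pr * Q = (\<Sum>x\<in>A \<times> C. monom 1 (r * fst x + snd x))"
    by (simp add: Pr_def Q_def sum_product sum.cartesian_product mult_monom case_prod_beta)
  have fib1: "\<And>i. i < n \<Longrightarrow> card {x \<in> A \<times> C. (fst x + snd x) mod n = i} = 1"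
    using T tile_def by auto
  have MT: "M dvd (P * Q - S)"
  proof -
    have "(\<Sum>i<n. monom (of_nat (card {x\<in>A \<times> C. (fst x + snd x) mod n = i})) i) = S"
      unfolding S_def by (intro sum.cong refl) (simp add: fib1)
    then show ?thesis using fold_sum[OF n0, of "A \<times> C" "\<lambda>x. fst x + snd x"] fA fC
      by (simp add: PQ M_def)
  qed
  have MU: "M dvd (P * S - of_nat (card A) * S)"
  proof -
    have "P * S - of_nat (card A) * S = (\<Sum>a\<in>A. monom 1 a * S - S)"
      by (simp add: P_def sum_distrib_right sum_subtractf)
    then show ?thesis using monom_shift_S[OF n0] by (simp add: dvd_sum M_def S_def)
  qed
  have MV: "M dvd (P ^ Suc k * Q - of_nat (card A) ^ k * S)" for k
  proof (induction k)
    case 0 then show ?case using MT by simp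
  next
    case (Suc k)
    have "P ^ Suc (Suc k) * Q - of_nat (card A) ^ Suc k * S
        = P * (P ^ Suc k * Q - of_nat (card A) ^ k * S) + of_nat (card A) ^ k * (P * S - of_nat (card A) * S)"
      by (simp add: algebra_simps)
    then show ?case using Suc MU by (metis dvd_add dvd_mult)
  qed
  obtain H where H: "P ^ r = Pr + of_nat r * H"
    using frob_set[OF r fA] unfolding P_def Pr_def by blast
  obtain G' where G1: "\<forall>k\<ge>n. coeff G' k = 0" and G2: "M dvd (H * Q - G')"
    using reduce_poly[OF n0] unfolding M_def by blast
  define Ns where "Ns = (\<Sum>i<n. monom (of_nat (N i) :: int) i)"
  have MX: "M dvd (Pr * Q - Ns)"
    using fold_sum[OF n0, of "A \<times> C" "\<lambda>x. r * fst x + snd x"] fA fC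
    by (simp add: PrQ M_def Ns_def N_def)
  have r1: "r = Suc (r - 1)" using r prime_gt_0_nat by simp
  have eqS: "of_nat (card A) ^ (r - 1) * S = smult (int (card A) ^ (r - 1)) S"
  proof -
    have "(of_nat (card A) :: int poly) ^ (r - 1) = of_nat (card A ^ (r - 1))"
      by (simp only: of_nat_power)
    then show ?thesis by (metis of_nat_mult_conv_smult of_nat_power)
  qed
  define D where "D = Ns - smult (int (card A) ^ (r - 1)) S + of_nat r * G'"
  have "D = (P ^ Suc (r - 1) * Q - of_nat (card A) ^ (r - 1) * S) - (Pr * Q - Ns) - of_nat r * (H * Q - G')"
    unfolding D_def eqS[symmetric] using H r1 by (simp add: algebra_simps)
  then have MD: "M dvd D" using MV MX G2 by (metis dvd_diff dvd_mult)
  have coefD: "\<forall>k\<ge>n. coeff D k = 0"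
    using G1 by (auto simp: D_def Ns_def S_def coeff_sum of_nat_mult_conv_smult)
  have D0: "D = 0" using small_dvd_zero[OF n0 coefD] MD M_def by simp
  have Npos: "N i \<ge> 1" if i: "i < n" for i
  proof (rule ccontr)
    assume "\<not> N i \<ge> 1"
    then have Ni: "N i = 0" by simp
    have "coeff D i = int (N i) - int (card A) ^ (r - 1) + int r * coeff G' i"
      using i by (simp add: D_def Ns_def S_def coeff_sum of_nat_mult_conv_smult)
    then have "int (card A) ^ (r - 1) = int r * coeff G' i" using D0 Ni by simp
    then have "int r dvd int (card A ^ (r - 1))" by simp
    then have "r dvd card A ^ (r - 1)" by (simp only: int_dvd_int_iff)
    then have "r dvd card A" using r prime_dvd_power by blast
    then show False using nd by simp
  qed
  have "card (A \<times> C) = (\<Sum>i<n. N i)"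
    unfolding N_def by (rule card_fibers) (use fA fC n0 in auto)
  then have "(\<Sum>i<n. N i) = n" using tile_card[OF n0 T] by (simp add: card_cartesian_product)
  then have N1: "\<forall>i<n. N i = 1" using all_one Npos by blast
  have "card {x \<in> (*) r ` A \<times> C. (fst x + snd x) mod n = i} = 1" if i: "i < n" for i
  proof -
    have inj: "inj_on (\<lambda>x. (r * fst x, snd x)) {x \<in> A \<times> C. (r * fst x + snd x) mod n = i}"
      using r prime_gt_0_nat by (auto simp: inj_on_def)
    have "{x \<in> (*) r ` A \<times> C. (fst x + snd x) mod n = i}
        = (\<lambda>x. (r * fst x, snd x)) ` {x \<in> A \<times> C. (r * fst x + snd x) mod n = i}"
      by (auto simp: image_iff)
    then show ?thesis using card_image[OF inj] N1 i N_def by simp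
  qed
  then show ?thesis unfolding tile_def using fA fC by auto
qed



lemma nat_mod_eq_iff: "((x::nat) mod m = y mod m) \<longleftrightarrow> int m dvd (int x - int y)"
proof -
  have "(x mod m = y mod m) \<longleftrightarrow> int (x mod m) = int (y mod m)" by simp
  also have "\<dots> \<longleftrightarrow> int x mod int m = int y mod int m" by (simp add: of_nat_mod)
  also have "\<dots> \<longleftrightarrow> int m dvd (int x - int y)" by (rule mod_eq_dvd_iff)
  finally show ?thesis .
qed

lemma dil_coprime:
  assumes n0: "n > 0" and T: "tile n A C"
  shows "t > 0 \<Longrightarrow> coprime t n \<Longrightarrow> tile n ((*) t ` A) C"
proof (induction t rule: less_induct)
  case (less t)
  show ?case
  proof (cases "t = 1")
    case True then show ?thesis using T by simp
  next
    case False
    obtain r where r: "prime r" "r dvd t" using prime_factor_nat[OF False] by blast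
    obtain t' where t': "t = r * t'" using r(2) by blast
    have t'0: "t' > 0" using less.prems(1) t' by auto
    have r1: "r > 1" using r(1) prime_gt_1_nat by blast
    have t'lt: "t' < t" using t' t'0 r1 by simp
    have cop': "coprime t' n" using less.prems(2) t' by simp
    have IH: "tile n ((*) t' ` A) C" using less.IH[OF t'lt t'0 cop'] .
    have fA: "finite A" using T tile_def by auto
    have cardeq: "card ((*) t' ` A) = card A"
      using t'0 by (intro card_image) (auto simp: inj_on_def)
    have "card A dvd n" using tile_card[OF n0 T] by (metis dvd_triv_left)
    moreover have "\<not> r dvd n"
    proof
      assume "r dvd n"
        then show False using less.prems(2) r coprime_common_divisor not_prime_unit by blast
    qed
    ultimately have "\<not> r dvd card ((*) t' ` A)" using cardeq dvd_trans by metis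
    then have "tile n ((*) r ` (*) t' ` A) C" using dil_prime[OF n0 IH r(1)] by blast
    moreover have "(*) r ` (*) t' ` A = (*) t ` A" using t' by (auto simp: image_image mult.assoc)
    ultimately show ?thesis by simp
  qed
qed

lemma cyc_dvd_xp:
  "cyclotomic_prime p dvd (monom (1::int) p - 1)"
proof -
  have "(monom 1 1 - 1) * cyclotomic_prime p = (\<Sum>i<p. monom (1::int) (Suc i) - monom 1 i)"
    by (simp add: cyclotomic_prime_def sum_distrib_left mult_monom sum_subtractf algebra_simps)
  also have "\<dots> = monom 1 p - 1" by (subst sum_lessThan_telescope) (simp add: one_pCons monom_0)
  finally show ?thesis by (metis dvd_triv_right)
qed

lemma smult_sum_right: "smult c (sum f A) = (\<Sum>i\<in>A. smult c (f i))"
  by (induction A rule: infinite_finite_induct) (auto simp: smult_add_right)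

lemma equi_dvd:
  assumes p0: "p > 0" and fA: "finite A"
    and eq: "\<forall>s<p. card {a\<in>A. a mod p = s} = k"
  shows "cyclotomic_prime p dvd mask_poly A"
proof -
  have "(monom 1 p - 1) dvd ((\<Sum>a\<in>A. monom (1::int) a)
           - (\<Sum>i<p. monom (of_nat (card {a\<in>A. a mod p = i})) i))"
    using fold_sum[OF p0 fA, of "\<lambda>a. a"] by simp
  moreover have "(\<Sum>i<p. monom (of_nat (card {a\<in>A. a mod p = i})) i) = smult (of_nat k) (cyclotomic_prime p)"
    using eq by (simp add: cyclotomic_prime_def smult_sum_right smult_monom)
  ultimately have "cyclotomic_prime p dvd (mask_poly A - smult (of_nat k) (cyclotomic_prime p))"
    using cyc_dvd_xp dvd_trans unfolding mask_poly_def by metis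
  then show ?thesis by (metis dvd_smult dvd_refl dvd_add diff_add_cancel)
qed

lemma count_res:
  assumes "p > 0" "p dvd n" "R < p"
  shows "card {i\<in>{..<n}. i mod p = R} = n div p"
proof -
  have "{i\<in>{..<n}. i mod p = R} = (\<lambda>j. j * p + R) ` {..<n div p}"
  proof (rule set_eqI, rule iffI)
    fix i assume i: "i \<in> {i\<in>{..<n}. i mod p = R}"
    have iR: "i mod p = R" and iN: "i < n" using i by auto
    have "i = (i div p) * p + R" using div_mult_mod_eq[of i p] iR by simp
    moreover have "i div p < n div p"
    proof (rule less_mult_imp_div_less)
      show "i < n div p * p" using iN assms(2) by simp
    qed
    ultimately show "i \<in> (\<lambda>j. j * p + R) ` {..<n div p}" by blast
  next
    fix i assume "i \<in> (\<lambda>j. j * p + R) ` {..<n div p}"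
    then obtain j where j: "j < n div p" "i = j * p + R" by auto
    have "j * p + R < (j + 1) * p" using assms(3) by simp
    also have "\<dots> \<le> (n div p) * p" using j(1) by (intro mult_right_mono) auto
    also have "\<dots> = n" using assms(2) by simp
    finally show "i \<in> {i\<in>{..<n}. i mod p = R}" using j assms(3) by simp
  qed
  moreover have "inj_on (\<lambda>j. j * p + R) {..<n div p}" using assms(1) by (auto simp: inj_on_def)
  ultimately show ?thesis by (simp add: card_image)
qed



lemma tiles_to_tile':
  assumes TP: "tiles_with_period (int ` A) n" and fA: "finite A"
  shows "n > 0 \<and> (\<exists>C. tile n A C)"
proof -
  obtain C :: "int set" where U: "\<forall>z::int. \<exists>!(a, c). a \<in> int ` A \<and> c \<in> C \<and> z = a + c"
    and n0: "n > 0" and img: "(\<lambda>c. c + int n) ` C = C"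
    using TP unfolding tiles_with_period_def by blast
  have up: "c + int n \<in> C" if "c \<in> C" for c using img that by blast
  have down: "c - int n \<in> C" if "c \<in> C" for c
  proof -
    from that img obtain c' where "c' \<in> C" "c = c' + int n" by (metis imageE)
    then show ?thesis by simp
  qed
  have upk: "c + int k * int n \<in> C \<and> c - int k * int n \<in> C" if "c \<in> C" for c k
  proof (induction k)
    case 0 then show ?case using that by simp
  next
    case (Suc k)
    then have "c + int k * int n + int n \<in> C" "c - int k * int n - int n \<in> C"
      using up down by blast+
    then show ?case by (simp add: algebra_simps)
  qed
  have perk: "c + k * int n \<in> C" if "c \<in> C" for c k
  proof (cases "k \<ge> 0")
    case True then show ?thesis using upk[OF that, of "nat k"] by simp
  next
    case False
    then have "c - int (nat (-k)) * int n \<in> C" using upk[OF that] by blast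
    then show ?thesis using False by simp
  qed
  have modC: "c mod int n \<in> C" if "c \<in> C" for c
  proof -
    have "c mod int n = c + (- (c div int n)) * int n" by (simp add: mod_div_mult_eq minus_div_mult_eq_mod[symmetric])
    then show ?thesis using perk[OF that] by metis
  qed
  define C0 where "C0 = {c::nat. c < n \<and> int c \<in> C}"
  have uq: "x = y" if "case x of (a, c) \<Rightarrow> a \<in> int ` A \<and> c \<in> C \<and> z = a + c"
      "case y of (a, c) \<Rightarrow> a \<in> int ` A \<and> c \<in> C \<and> z = a + c" for x y z
    using U that by (metis (no_types, lifting) Uniq_def the1_equality')
  have "card {x \<in> A \<times> C0. (fst x + snd x) mod n = i} = 1" if i: "i < n" for i
  proof -
    obtain a c where ac: "a \<in> int ` A" "c \<in> C" "int i = a + c" using U by blast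
    obtain a' where a': "a' \<in> A" "a = int a'" using ac(1) by blast
    define c' where "c' = nat (c mod int n)"
    have c'C: "int c' \<in> C" using modC[OF ac(2)] n0 by (simp add: c'_def)
    have c'n: "c' < n" using n0 by (simp add: c'_def nat_less_iff)
    have "int ((a' + c') mod n) = (a + c mod int n) mod int n"
      using n0 by (simp add: of_nat_mod c'_def a')
    also have "\<dots> = int i mod int n" using ac(3) by (simp add: mod_add_right_eq)
    also have "\<dots> = int i" using i by simp
    finally have ex: "(a' + c') mod n = i" by simp
    have "{x \<in> A \<times> C0. (fst x + snd x) mod n = i} = {(a', c')}"
    proof (rule set_eqI, rule iffI)
      fix x assume x: "x \<in> {x \<in> A \<times> C0. (fst x + snd x) mod n = i}"
      obtain a2 c2 where x2: "x = (a2, c2)" by (cases x)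
      have a2: "a2 \<in> A" and c2: "c2 < n" "int c2 \<in> C" and m2: "(a2 + c2) mod n = i"
        using x x2 C0_def by auto
      have "int n dvd (int (a2 + c2) - int (a' + c'))" using m2 ex nat_mod_eq_iff by metis
      then obtain k where k: "int (a2 + c2) - int (a' + c') = int n * k" by blast
      have "int c' + k * int n \<in> C" using perk[OF c'C] .
      moreover have "int (a2 + c2) = int a' + (int c' + k * int n)" using k by (simp add: algebra_simps)
      ultimately have "(int a2, int c2) = (int a', int c' + k * int n)"
        using uq[where x="(int a2, int c2)" and z="int (a2 + c2)" and y="(int a', int c' + k * int n)"] a2 c2 a'(1)
        by auto
      then have "a2 = a'" by simp
      then have "c2 mod n = c' mod n" using m2 ex by (metis nat_mod_eq_iff add_diff_cancel_left of_nat_add)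
      then have "c2 = c'" using c2 c'n by simp
      then show "x \<in> {(a', c')}" using x2 \<open>a2 = a'\<close> by simp
    next
      fix x assume "x \<in> {(a', c')}"
      then show "x \<in> {x \<in> A \<times> C0. (fst x + snd x) mod n = i}"
        using a' c'C c'n ex C0_def by auto
    qed
    then show ?thesis by simp
  qed
  moreover have "finite C0" unfolding C0_def by auto
  ultimately show ?thesis using n0 fA unfolding tile_def by blast
qed



lemma two_classes:
  assumes "\<forall>x\<in>X. \<forall>y\<in>X. (P::int) dvd (x - y) \<or> Q dvd (x - y)" "x0 \<in> X"
  shows "(\<forall>x\<in>X. P dvd (x - x0)) \<or> (\<forall>x\<in>X. Q dvd (x - x0))"
proof (rule ccontr)
  assume "\<not> ?thesis"
  then obtain x1 x2 where x: "x1 \<in> X" "x2 \<in> X" "\<not> P dvd (x1 - x0)" "\<not> Q dvd (x2 - x0)" by blast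
  have "Q dvd (x1 - x0)" using assms x by blast
  moreover have "P dvd (x2 - x0)" using assms x by blast
  moreover have "P dvd (x1 - x2) \<or> Q dvd (x1 - x2)" using assms x by blast
  ultimately consider "P dvd (x1 - x2)" "P dvd (x2 - x0)" | "Q dvd (x1 - x2)" "Q dvd (x1 - x0)" by blast
  then show False
  proof cases
    case 1
    then have "P dvd ((x1 - x2) + (x2 - x0))" by (rule dvd_add)
    then show False using x by simp
  next
    case 2
    from dvd_diff[OF 2(2) 2(1)] have "Q dvd ((x1 - x0) - (x1 - x2))" .
    then show False using x by simp
  qed
qed

lemma equi_from_C:
  assumes n0: "n > 0" and T: "tile n A C" and p0: "p > 0" and pn: "p dvd n"
    and c0: "c0 \<in> C" and cc: "\<forall>c\<in>C. c mod p = c0 mod p" and s: "s < p"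
  shows "card {a\<in>A. a mod p = s} * card C = n div p"
proof -
  have fA: "finite A" and fC: "finite C" using T tile_def by auto
  define R where "R = (s + c0) mod p"
  have Rp: "R < p" using p0 by (simp add: R_def)
  define E where "E = {x\<in>A \<times> C. (fst x + snd x) mod p = R}"
  have "E = {a\<in>A. a mod p = s} \<times> C"
  proof -
    have "(a + c) mod p = R \<longleftrightarrow> a mod p = s" if "c \<in> C" for a c
    proof -
      have "(a + c) mod p = (a + c0) mod p" using cc that by (metis mod_add_right_eq)
      moreover have "(a + c0) mod p = (s + c0) mod p \<longleftrightarrow> a mod p = s mod p"
        by (simp add: nat_mod_eq_iff)
      ultimately show ?thesis using s by (simp add: R_def)
    qed
    note key = this
    show ?thesis
    proof (rule set_eqI)
      fix x :: "nat \<times> nat"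
      obtain a c where x: "x = (a, c)" by (cases x)
      show "x \<in> E \<longleftrightarrow> x \<in> {a\<in>A. a mod p = s} \<times> C"
        unfolding E_def x using key[of c a] by auto
    qed
  qed
  then have cE: "card E = card {a\<in>A. a mod p = s} * card C" by (simp add: card_cartesian_product)
  have "card E = (\<Sum>i<n. card {x\<in>E. (fst x + snd x) mod n = i})"
    by (rule card_fibers) (use fA fC n0 in \<open>auto simp: E_def\<close>)
  also have "\<dots> = (\<Sum>i<n. if i mod p = R then 1 else 0)"
  proof (rule sum.cong[OF refl])
    fix i assume i: "i \<in> {..<n}"
    have "{x\<in>E. (fst x + snd x) mod n = i} =
        (if i mod p = R then {x \<in> A \<times> C. (fst x + snd x) mod n = i} else {})"
      unfolding E_def using pn by (auto simp: mod_mod_cancel)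
    then show "card {x\<in>E. (fst x + snd x) mod n = i} = (if i mod p = R then 1 else 0)"
      using T i unfolding tile_def by auto
  qed
  also have "\<dots> = card {i\<in>{..<n}. i mod p = R}"
    by (simp add: sum.inter_filter[symmetric])
  also have "\<dots> = n div p" using count_res[OF p0 pn Rp] .
  finally show ?thesis using cE by simp
qed

lemma unit_of_pq:
  assumes pf: "prime_factors n = {p, q}" and n0: "n > 0"
    and "\<not> int p dvd x" "\<not> int q dvd x"
  shows "coprime x (int n)"
proof (rule ccontr)
  assume nc: "\<not> coprime x (int n)"
  define g where "g = gcd x (int n)"
  have "g \<noteq> 1" using nc by (simp add: g_def coprime_iff_gcd_eq_1)
  moreover have "g \<ge> 0" by (simp add: g_def)
  ultimately have "nat g \<noteq> 1" by linarith
  then obtain r where r: "prime r" "r dvd nat g" using prime_factor_nat by blast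
  have "int r dvd g" using r(2) \<open>g \<ge> 0\<close> by (metis int_nat_eq of_nat_dvd_iff)
  then have rx: "int r dvd x" and rn: "int r dvd int n" by (auto simp: g_def intro: dvd_trans)
  have "r dvd n" using rn by simp
  then have "r \<in> prime_factors n" using r(1) n0 by (simp add: in_prime_factors_iff)
  then have "r = p \<or> r = q" using pf by blast
  then show False using rx assms by blast
qed

theorem lemma3p3:
  fixes A :: "nat set" and n p q :: nat
  assumes "finite A" and "0 \<in> A"
    and "tiles_with_period (int ` A) n"
    and "prime p" and "prime q" and "p \<noteq> q"
    and "prime_factors n = {p, q}"
    and "\<not> cyclotomic_prime p dvd mask_poly A"
    and "\<not> cyclotomic_prime q dvd mask_poly A"
  shows "(\<forall>a\<in>A. p dvd a) \<or> (\<forall>a\<in>A. q dvd a)"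
proof (rule ccontr)
  assume neg: "\<not> ?thesis"
  note fA = assms(1) and pf = assms(7)
  obtain C where n0: "n > 0" and T: "tile n A C" using tiles_to_tile'[OF assms(3) fA] by blast
  have fC: "finite C" using T tile_def by auto
  have pn: "p dvd n" and qn: "q dvd n" using pf n0 by (auto simp: in_prime_factors_iff dest: equalityD2)
  have p1: "p > 1" and q1: "q > 1" using assms(4,5) prime_gt_1_nat by blast+
  have "p \<le> n" using pn n0 by (rule dvd_imp_le)
  then have n1: "n > 1" using p1 by linarith
  have "\<exists>a1\<in>A. \<exists>a2\<in>A. \<not> int p dvd (int a1 - int a2) \<and> \<not> int q dvd (int a1 - int a2)"
  proof (rule ccontr)
    assume "\<not> ?thesis"
    then have "\<forall>x\<in>int ` A. \<forall>y\<in>int ` A. int p dvd (x - y) \<or> int q dvd (x - y)" by blast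
    from two_classes[OF this, of 0] assms(2)
    have "(\<forall>x\<in>int ` A. int p dvd x) \<or> (\<forall>x\<in>int ` A. int q dvd x)" by force
    then show False using neg by auto
  qed
  then obtain a1 a2 where a: "a1 \<in> A" "a2 \<in> A" "\<not> int p dvd (int a1 - int a2)" "\<not> int q dvd (int a1 - int a2)"
    by blast
  have "card A * card C = n" using tile_card[OF n0 T] .
  then have "C \<noteq> {}" using n0 by auto
  then obtain c0 where c0: "c0 \<in> C" by blast
  have noequi: False if pr: "prime r" "r dvd n" "\<forall>c\<in>C. int r dvd (int c - int c0)"
      "\<not> cyclotomic_prime r dvd mask_poly A" for r
  proof -
    have r0: "r > 0" using pr(1) prime_gt_0_nat by blast
    have cc: "\<forall>c\<in>C. c mod r = c0 mod r" using pr(3) nat_mod_eq_iff by blast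
    have cpos: "card C > 0" using c0 fC card_gt_0_iff by blast
    have "\<forall>s<r. card {a\<in>A. a mod r = s} = card {a\<in>A. a mod r = 0}"
    proof (intro allI impI)
      fix s assume "s < r"
      then have "card {a\<in>A. a mod r = s} * card C = card {a\<in>A. a mod r = 0} * card C"
        using equi_from_C[OF n0 T r0 pr(2) c0 cc] r0 by metis
      then show "card {a\<in>A. a mod r = s} = card {a\<in>A. a mod r = 0}" using cpos by simp
    qed
    then show False using equi_dvd[OF r0 fA] pr(4) by blast
  qed
  have "\<exists>c1\<in>C. \<exists>c2\<in>C. \<not> int p dvd (int c1 - int c2) \<and> \<not> int q dvd (int c1 - int c2)"
  proof (rule ccontr)
    assume "\<not> ?thesis"
    then have "\<forall>x\<in>int ` C. \<forall>y\<in>int ` C. int p dvd (x - y) \<or> int q dvd (x - y)" by blast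
    from two_classes[OF this, of "int c0"] c0
    have "(\<forall>c\<in>C. int p dvd (int c - int c0)) \<or> (\<forall>c\<in>C. int q dvd (int c - int c0))" by force
    then show False using noequi[OF assms(4) pn _ assms(8)] noequi[OF assms(5) qn _ assms(9)] by blast
  qed
  then obtain c1 c2 where c: "c1 \<in> C" "c2 \<in> C" "\<not> int p dvd (int c1 - int c2)" "\<not> int q dvd (int c1 - int c2)"
    by blast
  define d where "d = int a1 - int a2"
  define e where "e = int c1 - int c2"
  have cd: "coprime d (int n)" using unit_of_pq[OF pf n0] a d_def by blast
  have ce: "coprime e (int n)" using unit_of_pq[OF pf n0] c e_def by blast
  obtain u v where uv: "u * d + v * int n = 1"
  proof -
    have "gcd d (int n) = 1" using cd by (simp add: coprime_iff_gcd_eq_1)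
    then show ?thesis using bezout_int[of d "int n"] that by auto
  qed
  have cu: "coprime u (int n)"
  proof -
    have "gcd u (int n) dvd u * d + v * int n" by simp
    then have "gcd u (int n) dvd 1" using uv by simp
    then show ?thesis by (simp add: coprime_iff_gcd_eq_1)
  qed
  define t0 where "t0 = e * u"
  have ct0: "coprime t0 (int n)" using ce cu by (simp add: t0_def)
  define t where "t = nat (t0 mod int n)"
  have tt0: "int t = t0 mod int n" using n0 by (simp add: t_def)
  have "coprime (t0 mod int n) (int n)" using ct0 n0 by (simp add: coprime_iff_gcd_eq_1 gcd_mod_left)
  then have ct: "coprime t n" using tt0 by (metis coprime_int_iff)
  have t0': "t > 0"
  proof (rule ccontr)
    assume "\<not> t > 0"
    then have "t = 0" by simp
    then have "coprime 0 n" using ct by simp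
    then show False using n1 by simp
  qed
  have "int n dvd (int t * d - e)"
  proof -
    have "int t * d - e = (t0 mod int n - t0) * d + e * (u * d - 1)"
      by (simp add: tt0 t0_def algebra_simps)
    also have "\<dots> = (t0 mod int n - t0) * d - e * v * int n"
    proof -
      have h: "e * (u * d) + e * (v * int n) = e" using uv by (metis distrib_left mult_1_right)
      show ?thesis using h by (simp add: algebra_simps)
    qed
    finally show ?thesis by (simp add: mod_eq_dvd_iff[symmetric] mod_diff_left_eq)
  qed
  then have "int n dvd (int (t * a1 + c2) - int (t * a2 + c1))"
    by (simp add: d_def e_def algebra_simps)
  then have eqm: "(t * a1 + c2) mod n = (t * a2 + c1) mod n" using nat_mod_eq_iff by blast
  have T2: "tile n ((*) t ` A) C" using dil_coprime[OF n0 T t0' ct] .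
  define i where "i = (t * a1 + c2) mod n"
  have "i < n" using n0 by (simp add: i_def)
  then have c1: "card {x \<in> (*) t ` A \<times> C. (fst x + snd x) mod n = i} = 1" using T2 tile_def by blast
  have "(t * a1, c2) \<in> {x \<in> (*) t ` A \<times> C. (fst x + snd x) mod n = i}"
    using a c by (auto simp: i_def)
  moreover have "(t * a2, c1) \<in> {x \<in> (*) t ` A \<times> C. (fst x + snd x) mod n = i}"
    using a c eqm by (auto simp: i_def)
  moreover obtain w where "{x \<in> (*) t ` A \<times> C. (fst x + snd x) mod n = i} = {w}"
    using c1 card_1_singletonE by blast
  ultimately have "(t * a1, c2) = (t * a2, c1)" by simp
  then have "a1 = a2" using t0' by simp
  then show False using a(3) by simp
qed

end
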